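(* Assume (A). If $c_1\ge c_1^F$, then $\inf_{t>t_0}\sup_{s\in(0,t)}\Upsilon(s,t)=L_{c_2}(t^F_{c_2})$.
   Context: $v:[0,\infty)\to[0,\infty)$ is continuous, $v(0)=0$, $\lim_{t\to\infty}v(t)/t^\alpha=0$ for some $\alpha<2$, and is the variance function of a centered Gaussian process $A$ on $\mathbb R$ with stationary increments, $A(0)=0$: $\mathrm{Var}(A(t)-A(s))=v(|t-s|)$; $\Gamma(s,t):=\tfrac12(v(|s|)+v(|t|)-v(|t-s|))$. Fix $b>0$, $c_1>c_2>0$, $t_0:=b/(c_1-c_2)$. For $0<s<t$, $\Sigma(s,t):=\begin{pmatrix}v(t)&\Gamma(s,t)\\ \Gamma(s,t)&v(s)\end{pmatrix}$ (assumed nonsingular), $\Lambda_{s,t}(y,z):=\frac12(y,z)\Sigma(t-s,t)^{-1}(y,z)^\top$, $k(s,t):=\frac{\Gamma(s,t)}{v(t)}(b+c_2t)$, $\Upsilon(s,t):=\Lambda_{s,t}(b+c_2t,b+c_2t-c_1s)$ if $k(s,t)>c_1s$ and $\Upsilon(s,t):=(b+c_2t)^2/(2v(t))$ otherwise. $L_c(t):=(b+ct)^2/(2v(t))$; $t^F_{c_2}$ denotes a minimizer of $L_{c_2}$ over $t>0$, and $c_1^F:=\sup_{s\in(0,t^F_{c_2})}k(s,t^F_{c_2})/s$. Assumption (A): $\sqrt v\in C^2([0,\infty))$, strictly increasing and strictly concave. *)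

theory Defs
  imports "HOL-Probability.Probability"
begin

definition centered_gaussian_rv :: "'a measure \<Rightarrow> ('a \<Rightarrow> real) \<Rightarrow> bool" where
  "centered_gaussian_rv M X \<longleftrightarrow>
     X \<in> borel_measurable M \<and> integrable M (\<lambda>x. (X x)^2) \<and>
     (\<forall>u. char (distr M borel X) u =
            complex_of_real (exp (- (u^2 * (\<integral>x. (X x)^2 \<partial>M)) / 2)))"

text \<open>v is the variance function of a centred Gaussian process A on the real line with
stationary increments and A(0) = 0 (the process is realised on the path space).\<close>
definition gaussian_si_variance :: "(real \<Rightarrow> real) \<Rightarrow> bool" where
  "gaussian_si_variance v \<longleftrightarrow>
     (\<exists>(M::(real \<Rightarrow> real) measure) (A::real \<Rightarrow> (real \<Rightarrow> real) \<Rightarrow> real).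
        prob_space M \<and>
        (AE \<omega> in M. A 0 \<omega> = 0) \<and>
        (\<forall>(F::real set) (c::real \<Rightarrow> real). finite F \<longrightarrow>
            centered_gaussian_rv M (\<lambda>\<omega>. \<Sum>t\<in>F. c t * A t \<omega>)) \<and>
        (\<forall>s t. prob_space.variance M (\<lambda>\<omega>. A t \<omega> - A s \<omega>) = v \<bar>t - s\<bar>))"

definition Gam :: "(real \<Rightarrow> real) \<Rightarrow> real \<Rightarrow> real \<Rightarrow> real" where
  "Gam v s t = (v \<bar>s\<bar> + v \<bar>t\<bar> - v \<bar>t - s\<bar>) / 2"

text \<open>Sigma(s,t) = [[v t, Gam s t],[Gam s t, v s]]; its determinant.\<close>
definition detSigma :: "(real \<Rightarrow> real) \<Rightarrow> real \<Rightarrow> real \<Rightarrow> real" where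
  "detSigma v s t = v t * v s - (Gam v s t)^2"

text \<open>Lambda_{s,t}(y,z) = 1/2 (y,z) Sigma(t-s,t)^{-1} (y,z)^T, written out with the explicit
inverse of the symmetric 2x2 matrix.\<close>
definition Lam :: "(real \<Rightarrow> real) \<Rightarrow> real \<Rightarrow> real \<Rightarrow> real \<Rightarrow> real \<Rightarrow> real" where
  "Lam v s t y z =
     (v (t - s) * y^2 - 2 * Gam v (t - s) t * y * z + v t * z^2) / (2 * detSigma v (t - s) t)"

definition kfun :: "(real \<Rightarrow> real) \<Rightarrow> real \<Rightarrow> real \<Rightarrow> real \<Rightarrow> real \<Rightarrow> real" where
  "kfun v b c2 s t = Gam v s t / v t * (b + c2 * t)"

definition Ups :: "(real \<Rightarrow> real) \<Rightarrow> real \<Rightarrow> real \<Rightarrow> real \<Rightarrow> real \<Rightarrow> real \<Rightarrow> real" where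
  "Ups v b c1 c2 s t =
     (if kfun v b c2 s t > c1 * s
      then Lam v s t (b + c2 * t) (b + c2 * t - c1 * s)
      else (b + c2 * t)^2 / (2 * v t))"

definition Lc :: "(real \<Rightarrow> real) \<Rightarrow> real \<Rightarrow> real \<Rightarrow> real \<Rightarrow> real" where
  "Lc v b c t = (b + c * t)^2 / (2 * v t)"

definition assumption_A :: "(real \<Rightarrow> real) \<Rightarrow> bool" where
  "assumption_A v \<longleftrightarrow>
     (\<exists>D D2. (\<forall>x\<ge>0. ((\<lambda>y. sqrt (v y)) has_real_derivative D x) (at x within {0..})) \<and>
             (\<forall>x\<ge>0. (D has_real_derivative D2 x) (at x within {0..})) \<and>
             continuous_on {0..} D2) \<and>
     strict_mono_on {0..} (\<lambda>x. sqrt (v x)) \<and>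
     (\<forall>x\<ge>0. \<forall>y\<ge>0. \<forall>u. x \<noteq> y \<longrightarrow> 0 < u \<longrightarrow> u < 1 \<longrightarrow>
        sqrt (v (u * x + (1 - u) * y)) > u * sqrt (v x) + (1 - u) * sqrt (v y))"

end

theory Submission
  imports Defs
begin

lemma subadd_f:
  fixes f :: "real \<Rightarrow> real"
  assumes conc: "\<forall>x\<ge>0. \<forall>y\<ge>0. \<forall>u. x \<noteq> y \<longrightarrow> 0 < u \<longrightarrow> u < 1 \<longrightarrow>
        f (u * x + (1 - u) * y) > u * f x + (1 - u) * f y"
    and f0: "f 0 = 0" and st: "0 < s" "s < t"
  shows "f t < f s + f (t - s)"
proof -
  have "f ((s/t) * t + (1 - s/t) * 0) > (s/t) * f t + (1 - s/t) * f 0"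
    using conc st by (intro conc[rule_format]) (auto simp: field_simps)
  then have h1: "f s > (s/t) * f t" using st f0 by simp
  have "f (((t-s)/t) * t + (1 - (t-s)/t) * 0) > ((t-s)/t) * f t + (1 - (t-s)/t) * f 0"
    using conc st by (intro conc[rule_format]) (auto simp: field_simps)
  then have h2: "f (t-s) > ((t-s)/t) * f t" using st f0 by simp
  have "(s/t) * f t + ((t-s)/t) * f t = f t" using st by (simp add: field_simps)
  then show ?thesis using h1 h2 by linarith
qed

lemma det_pos:
  fixes v :: "real \<Rightarrow> real"
  assumes vnn: "\<forall>t\<ge>0. v t \<ge> 0"
    and conc: "\<forall>x\<ge>0. \<forall>y\<ge>0. \<forall>u. x \<noteq> y \<longrightarrow> 0 < u \<longrightarrow> u < 1 \<longrightarrow>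
        sqrt (v (u * x + (1 - u) * y)) > u * sqrt (v x) + (1 - u) * sqrt (v y)"
    and mono: "strict_mono_on {0..} (\<lambda>x. sqrt (v x))"
    and v0: "v 0 = 0" and st: "0 < s" "s < t"
  shows "detSigma v (t - s) t > 0"
proof -
  define a where "a = sqrt (v t)"
  define b where "b = sqrt (v (t - s))"
  define c where "c = sqrt (v s)"
  have va: "v t = a^2" unfolding a_def using vnn st by simp
  have nn: "v (t-s) \<ge> 0" "v s \<ge> 0" using vnn[rule_format, of "t-s"] vnn[rule_format, of s] st by auto
  have vb: "v (t-s) = b^2" unfolding b_def using nn(1) by simp
  have vc: "v s = c^2" unfolding c_def using nn(2) by simp
  have b0: "b \<ge> 0" "c \<ge> 0" unfolding b_def c_def using nn by auto
  have sub: "a < c + b" unfolding a_def b_def c_def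
    using subadd_f[of "\<lambda>x. sqrt (v x)" s t] conc v0 st by auto
  have ca: "c < a" unfolding a_def c_def using mono st
    by (simp add: strict_mono_on_def)
  have ab: "b \<le> a" unfolding a_def b_def using mono st
    by (auto simp: strict_mono_on_def intro: less_imp_le)
  have G: "Gam v (t - s) t = (a^2 + b^2 - c^2) / 2"
    unfolding Gam_def using st va vb vc by simp
  have det: "detSigma v (t - s) t = (c^2 - (a-b)^2) * ((a+b)^2 - c^2) / 4"
    unfolding detSigma_def G va vb by (simp add: field_simps power2_eq_square)
  have p1: "c^2 - (a-b)^2 > 0"
  proof -
    have "a - b < c" "0 \<le> a - b" using sub ab by auto
    then have "(a-b)^2 < c^2" by (simp add: power_strict_mono)
    then show ?thesis by simp
  qed
  have p2: "(a+b)^2 - c^2 > 0"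
  proof -
    have "c < a + b" "0 \<le> c" using ca b0 by auto
    then have "c^2 < (a+b)^2" by (simp add: power_strict_mono)
    then show ?thesis by simp
  qed
  show ?thesis unfolding det using p1 p2 by simp
qed

lemma Lam_ge:
  fixes v :: "real \<Rightarrow> real"
  assumes d: "detSigma v (t - s) t > 0" and vt: "v t > 0"
  shows "Lam v s t y z \<ge> y^2 / (2 * v t)"
proof -
  define Q where "Q = v (t - s) * y^2 - 2 * Gam v (t - s) t * y * z + v t * z^2"
  have id: "v t * Q - detSigma v (t - s) t * y^2 = (v t * z - Gam v (t - s) t * y)^2"
    unfolding Q_def detSigma_def by (simp add: algebra_simps power2_eq_square)
  have "v t * Q \<ge> detSigma v (t - s) t * y^2"
    using id by (metis diff_ge_0_iff_ge zero_le_power2)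
  then have "Q / (2 * detSigma v (t - s) t) \<ge> y^2 / (2 * v t)"
    using d vt by (simp add: divide_simps mult.commute)
  then show ?thesis unfolding Lam_def Q_def .
qed

lemma key_s:
  fixes v :: "real \<Rightarrow> real"
  assumes vnn: "\<forall>t\<ge>0. v t \<ge> 0"
    and conc: "\<forall>x\<ge>0. \<forall>y\<ge>0. \<forall>u. x \<noteq> y \<longrightarrow> 0 < u \<longrightarrow> u < 1 \<longrightarrow>
        sqrt (v (u * x + (1 - u) * y)) > u * sqrt (v x) + (1 - u) * sqrt (v y)"
    and mono: "strict_mono_on {0..} (\<lambda>x. sqrt (v x))"
    and v0: "v 0 = 0"
    and der: "((\<lambda>x. sqrt (v x)) has_real_derivative D0) (at 0 within {0..})"
    and t: "t > 0"
  shows "\<exists>s. 0 < s \<and> s < t \<and> Gam v s t / s > v t / t"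
proof -
  define f where "f = (\<lambda>x. sqrt (v x))"
  have f0: "f 0 = 0" unfolding f_def using v0 by simp
  have vf: "v x = (f x)^2" if "x \<ge> 0" for x unfolding f_def using vnn that by simp
  have fnn: "f x \<ge> 0" if "x \<ge> 0" for x unfolding f_def using vnn that by simp
  define a where "a = f t"
  have apos: "a > 0" unfolding a_def f_def using mono t f0[unfolded f_def]
    by (metis atLeast_iff less_le_not_le order_refl strict_mono_onD)
  define m where "m = f (t/2)"
  have "f ((1/2) * t + (1 - 1/2) * 0) > (1/2) * f t + (1 - 1/2) * f 0"
    unfolding f_def using t by (intro conc[rule_format]) auto
  then have mgt: "m > a / 2" unfolding m_def a_def using f0 by simp
  define \<sigma> where "\<sigma> = 2 * (a - m) / t"
  have sig: "t * \<sigma> < a" unfolding \<sigma>_def using mgt t by (simp add: field_simps)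
  define \<delta> where "\<delta> = 2 * a * (a - t * \<sigma>)"
  have dpos: "\<delta> > 0" unfolding \<delta>_def using apos sig by simp
  have lim: "((\<lambda>u. v u / u) \<longlongrightarrow> 0) (at_right 0)"
  proof -
    have "((\<lambda>y. (f y - f 0) / (y - 0)) \<longlongrightarrow> D0) (at 0 within {0..})"
      using der unfolding f_def has_field_derivative_iff by simp
    then have l1: "((\<lambda>y. f y / y) \<longlongrightarrow> D0) (at_right 0)"
      using f0 by (auto intro: tendsto_within_subset)
    have "continuous (at 0 within {0..}) f"
      using DERIV_continuous[OF der] unfolding f_def by simp
    then have "(f \<longlongrightarrow> 0) (at 0 within {0..})"
      using f0 by (simp add: continuous_within)
    then have l2: "(f \<longlongrightarrow> 0) (at_right 0)"
      by (auto intro: tendsto_within_subset)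
    have "((\<lambda>y. f y * (f y / y)) \<longlongrightarrow> 0 * D0) (at_right 0)"
      by (intro tendsto_mult l1 l2)
    then have l3: "((\<lambda>y. f y * (f y / y)) \<longlongrightarrow> 0) (at_right 0)" by simp
    have "eventually (\<lambda>y. f y * (f y / y) = v y / y) (at_right 0)"
      unfolding eventually_at_right_field
      by (rule exI[of _ 1]) (auto simp: vf power2_eq_square)
    then show ?thesis by (rule Lim_transform_eventually[OF l3])
  qed
  have "eventually (\<lambda>u. v u / u < \<delta> / t) (at_right 0)"
    using lim dpos t by (intro order_tendstoD) auto
  moreover have "eventually (\<lambda>u. 0 < u \<and> u < t / 2) (at_right (0::real))"
    unfolding eventually_at_right_field using t by (intro exI[of _ "t/2"]) auto
  ultimately have "eventually (\<lambda>u. v u / u < \<delta> / t \<and> 0 < u \<and> u < t / 2) (at_right (0::real))"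
    by (rule eventually_conj)
  then obtain u where u: "v u / u < \<delta> / t" "0 < u" "u < t / 2"
    using eventually_happens[of _ "at_right (0::real)"] by force
  define lm where "lm = 2 * u / t"
  have lam: "0 < lm" "lm < 1" unfolding lm_def using u t by (auto simp: field_simps)
  have "f (lm * (t/2) + (1 - lm) * t) > lm * f (t/2) + (1 - lm) * f t"
    unfolding f_def using t lam by (intro conc[rule_format]) auto
  moreover have "lm * (t/2) + (1 - lm) * t = t - u" unfolding lm_def using t by (simp add: field_simps)
  ultimately have "f (t - u) > lm * m + (1 - lm) * a" unfolding m_def a_def by simp
  then have ch: "a - f (t - u) < u * \<sigma>" unfolding \<sigma>_def lm_def using t
    by (simp add: field_simps)
  define w where "w = f (t - u)"
  have w0: "w \<ge> 0" unfolding w_def using fnn u by simp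
  have wa: "w \<le> a" unfolding w_def a_def f_def
    using strict_mono_onD[OF mono, of "t - u" t] u t by auto
  have diff: "v t - v (t - u) = (a - w) * (a + w)"
    using vf[of t] vf[of "t-u"] t u unfolding a_def w_def by (simp add: power2_eq_square algebra_simps)
  have "(a - w) * (a + w) \<le> (a - w) * (2 * a)" using wa by (intro mult_left_mono) auto
  also have "\<dots> \<le> (u * \<sigma>) * (2 * a)" using ch apos unfolding w_def by (intro mult_right_mono) auto
  finally have "v t - v (t - u) \<le> 2 * a * u * \<sigma>"
    using diff by (simp add: algebra_simps)
  then have "t * (v t - v (t - u)) \<le> t * (2 * a * u * \<sigma>)"
    using t by (intro mult_left_mono) auto
  then have e1: "t * (v t - v (t - u)) \<le> 2 * a * t * u * \<sigma>"
    by (simp add: algebra_simps)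
  have e2: "t * v u < u * \<delta>" using u t by (simp add: field_simps)
  have vt: "v t = a^2" unfolding a_def using vf t by simp
  have main: "t * (v (t - u) + v t - v u) > 2 * (t - u) * v t"
    using e1 e2 unfolding \<delta>_def vt by (simp add: algebra_simps power2_eq_square)
  have G: "Gam v (t - u) t = (v (t - u) + v t - v u) / 2"
    unfolding Gam_def using u t by simp
  show ?thesis
  proof (intro exI conjI)
    show "0 < t - u" "t - u < t" using u t by auto
    show "Gam v (t - u) t / (t - u) > v t / t"
      unfolding G using main u t by (simp add: field_simps)
  qed
qed

theorem corollary3p7:
  fixes v :: "real \<Rightarrow> real" and b c1 c2 tF :: real
  assumes v_nonneg: "\<forall>t\<ge>0. v t \<ge> 0"
    and v_cont: "continuous_on {0..} v"
    and v0: "v 0 = 0"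
    and v_growth: "\<exists>\<alpha><2. ((\<lambda>t. v t / t powr \<alpha>) \<longlongrightarrow> 0) at_top"
    and v_gauss: "gaussian_si_variance v"
    and Sigma_nonsing: "\<forall>s t. 0 < s \<longrightarrow> s < t \<longrightarrow> detSigma v s t \<noteq> 0"
    and A: "assumption_A v"
    and b: "b > 0" and c2: "c2 > 0" and c12: "c1 > c2"
    and tF_pos: "tF > 0"
    and tF_min: "\<forall>t>0. Lc v b c2 tF \<le> Lc v b c2 t"
    and c1_ge: "\<forall>s\<in>{0<..<tF}. kfun v b c2 s tF / s \<le> c1"
  shows "(INF t\<in>{b / (c1 - c2)<..}. SUP s\<in>{0<..<t}. ereal (Ups v b c1 c2 s t))
           = ereal (Lc v b c2 tF)"
proof -
  obtain D D2 where der: "\<forall>x\<ge>0. ((\<lambda>y. sqrt (v y)) has_real_derivative D x) (at x within {0..})"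
    using A unfolding assumption_A_def by blast
  have mono: "strict_mono_on {0..} (\<lambda>x. sqrt (v x))"
    and conc: "\<forall>x\<ge>0. \<forall>y\<ge>0. \<forall>u. x \<noteq> y \<longrightarrow> 0 < u \<longrightarrow> u < 1 \<longrightarrow>
        sqrt (v (u * x + (1 - u) * y)) > u * sqrt (v x) + (1 - u) * sqrt (v y)"
    using A unfolding assumption_A_def by blast+
  have der0: "((\<lambda>y. sqrt (v y)) has_real_derivative D 0) (at 0 within {0..})"
    using der by simp
  have vpos: "v t > 0" if "t > 0" for t
  proof -
    have "sqrt (v 0) < sqrt (v t)" using strict_mono_onD[OF mono, of 0 t] that by auto
    then show ?thesis using v0 v_nonneg that by (metis less_eq_real_def real_sqrt_zero real_sqrt_lt_0_iff linorder_not_le)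
  qed
  define t0 where "t0 = b / (c1 - c2)"
  have t0pos: "t0 > 0" unfolding t0_def using b c12 by simp
  have tFgt: "tF > t0"
  proof -
    obtain s where s: "0 < s" "s < tF" "Gam v s tF / s > v tF / tF"
      using key_s[OF v_nonneg conc mono v0 der0 tF_pos] by blast
    have vF: "v tF > 0" using vpos tF_pos .
    have bc: "b + c2 * tF > 0" using b c2 tF_pos by (simp add: add_pos_pos)
    have "kfun v b c2 s tF / s = (Gam v s tF / s) * ((b + c2 * tF) / v tF)"
      unfolding kfun_def by (simp add: field_simps)
    also have "\<dots> > (v tF / tF) * ((b + c2 * tF) / v tF)"
      using s(3) vF bc by (intro mult_strict_right_mono) auto
    also have "(v tF / tF) * ((b + c2 * tF) / v tF) = (b + c2 * tF) / tF"
      using vF by simp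
    finally have lt: "(b + c2 * tF) / tF < kfun v b c2 s tF / s" .
    have "kfun v b c2 s tF / s \<le> c1" using c1_ge s(1,2) by simp
    then have "(b + c2 * tF) / tF < c1" using lt by linarith
    then have "b + c2 * tF < c1 * tF" using tF_pos by (simp add: field_simps)
    then have "b < (c1 - c2) * tF" by (simp add: algebra_simps)
    then show ?thesis unfolding t0_def using c12 by (simp add: field_simps)
  qed
  have upper: "(INF t\<in>{t0<..}. SUP s\<in>{0<..<t}. ereal (Ups v b c1 c2 s t)) \<le> ereal (Lc v b c2 tF)"
  proof (rule INF_lower2)
    show "tF \<in> {t0<..}" using tFgt by simp
    show "(SUP s\<in>{0<..<tF}. ereal (Ups v b c1 c2 s tF)) \<le> ereal (Lc v b c2 tF)"
    proof (rule SUP_least)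
      fix s assume s: "s \<in> {0<..<tF}"
      then have "kfun v b c2 s tF / s \<le> c1" using c1_ge by blast
      then have "kfun v b c2 s tF \<le> c1 * s" using s by (simp add: pos_divide_le_eq)
      then show "ereal (Ups v b c1 c2 s tF) \<le> ereal (Lc v b c2 tF)"
        unfolding Ups_def Lc_def by simp
    qed
  qed
  have lower: "ereal (Lc v b c2 tF) \<le> (INF t\<in>{t0<..}. SUP s\<in>{0<..<t}. ereal (Ups v b c1 c2 s t))"
  proof (rule INF_greatest)
    fix t assume t: "t \<in> {t0<..}"
    then have tpos: "t > 0" using t0pos by simp
    have vt: "v t > 0" using vpos tpos .
    have Lt: "Lc v b c2 t \<le> Ups v b c1 c2 (t/2) t"
    proof (cases "kfun v b c2 (t/2) t > c1 * (t/2)")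
      case True
      have "detSigma v (t - t/2) t > 0"
        using det_pos[OF v_nonneg conc mono v0, of "t/2" t] tpos by simp
      then have "Lam v (t/2) t (b + c2 * t) (b + c2 * t - c1 * (t/2)) \<ge> (b + c2 * t)^2 / (2 * v t)"
        using Lam_ge vt by blast
      then show ?thesis using True unfolding Ups_def Lc_def by simp
    next
      case False
      then show ?thesis unfolding Ups_def Lc_def by simp
    qed
    have "ereal (Lc v b c2 tF) \<le> ereal (Ups v b c1 c2 (t/2) t)"
      using tF_min tpos Lt by force
    then show "ereal (Lc v b c2 tF) \<le> (SUP s\<in>{0<..<t}. ereal (Ups v b c1 c2 s t))"
      by (rule SUP_upper2[rotated]) (use tpos in simp)
  qed
  show ?thesis using upper lower unfolding t0_def by (rule antisym)
qed

end
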